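(* Let $V$ be a Whittaker module of type $\eta$ over $R$ with cyclic Whittaker vector $w$, and suppose $Z_V=(p(\Omega)^n)$ where $p$ is an irreducible polynomial and $n\ge1$. Let $V_i=Rp(\Omega)^iw$ for $i=0,\dots,n$ and $S_i=V_i/V_{i+1}$ for $i=0,\dots,n-1$. Then each $S_i$ is an irreducible Whittaker module of type $\eta$, and the $S_i$ are the factors of a composition series $V=V_0\supseteq V_1\supseteq\cdots\supseteq V_n$ of $V$. In particular, $V$ has finite length.
   Context: Let $f\in\mathbb{C}[H]$ be a polynomial. $R=R(f)$ is the associative $\mathbb{C}$-algebra generated by $E,F,H$ with relations $EF-FE=f(H)$, $HE-EH=E$, $HF-FH=-F$. Let $u\in\mathbb{C}[H]$ satisfy $f(H)=\tfrac12(u(H+1)-u(H))$ and $\Omega=2FE+u(H+1)$; the center $Z(R)$ is the polynomial ring $\mathbb{C}[\Omega]$. Let $R(E)=\mathbb{C}[E]$ and fix an algebra homomorphism $\eta:R(E)\to\mathbb{C}$ with $\eta(E)\neq0$. A vector $v$ of an $R$-module $V$ is a Whittaker vector of type $\eta$ if $Ev=\eta(E)v$; $V$ is a Whittaker module of type $\eta$ with cyclic Whittaker vector $w$ if $w$ is a Whittaker vector and $V=Rw$. $Z_V=\mathrm{Ann}_R(V)\cap Z(R)$. *)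

theory Defs
  imports "HOL-Computational_Algebra.Polynomial"
begin

text \<open>An R(f)-module is encoded as a complex vector space (carrier with explicit
operations) together with the actions of the generators E, F, H.\<close>

record 'a rmod =
  carrier :: "'a set"
  zero :: 'a
  add :: "'a \<Rightarrow> 'a \<Rightarrow> 'a"
  smul :: "complex \<Rightarrow> 'a \<Rightarrow> 'a"
  actE :: "'a \<Rightarrow> 'a"
  actF :: "'a \<Rightarrow> 'a"
  actH :: "'a \<Rightarrow> 'a"

text \<open>Action q(T) v of a polynomial q in an operator T (Horner scheme).\<close>
definition polyop :: "('a, 'b) rmod_scheme \<Rightarrow> ('a \<Rightarrow> 'a) \<Rightarrow> complex poly \<Rightarrow> 'a \<Rightarrow> 'a" where
  "polyop M T q v = foldr (\<lambda>a acc. add M (smul M a v) (T acc)) (coeffs q) (zero M)"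

definition vspace :: "('a, 'b) rmod_scheme \<Rightarrow> bool" where
  "vspace M \<longleftrightarrow>
     zero M \<in> carrier M \<and>
     (\<forall>x\<in>carrier M. \<forall>y\<in>carrier M. add M x y \<in> carrier M) \<and>
     (\<forall>a. \<forall>x\<in>carrier M. smul M a x \<in> carrier M) \<and>
     (\<forall>x\<in>carrier M. \<forall>y\<in>carrier M. \<forall>z\<in>carrier M. add M (add M x y) z = add M x (add M y z)) \<and>
     (\<forall>x\<in>carrier M. \<forall>y\<in>carrier M. add M x y = add M y x) \<and>
     (\<forall>x\<in>carrier M. add M (zero M) x = x) \<and>
     (\<forall>x\<in>carrier M. \<exists>y\<in>carrier M. add M x y = zero M) \<and>
     (\<forall>a b. \<forall>x\<in>carrier M. smul M (a + b) x = add M (smul M a x) (smul M b x)) \<and>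
     (\<forall>a. \<forall>x\<in>carrier M. \<forall>y\<in>carrier M. smul M a (add M x y) = add M (smul M a x) (smul M a y)) \<and>
     (\<forall>a b. \<forall>x\<in>carrier M. smul M (a * b) x = smul M a (smul M b x)) \<and>
     (\<forall>x\<in>carrier M. smul M 1 x = x)"

definition lin_op :: "('a, 'b) rmod_scheme \<Rightarrow> ('a \<Rightarrow> 'a) \<Rightarrow> bool" where
  "lin_op M T \<longleftrightarrow> (\<forall>x\<in>carrier M. T x \<in> carrier M) \<and>
     (\<forall>x\<in>carrier M. \<forall>y\<in>carrier M. T (add M x y) = add M (T x) (T y)) \<and>
     (\<forall>a. \<forall>x\<in>carrier M. T (smul M a x) = smul M a (T x))"

text \<open>Module over R(f): EF - FE = f(H), HE - EH = E, HF - FH = -F.\<close>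
definition is_Rmod :: "complex poly \<Rightarrow> ('a, 'b) rmod_scheme \<Rightarrow> bool" where
  "is_Rmod f M \<longleftrightarrow> vspace M \<and> lin_op M (actE M) \<and> lin_op M (actF M) \<and> lin_op M (actH M) \<and>
     (\<forall>v\<in>carrier M. actE M (actF M v) = add M (actF M (actE M v)) (polyop M (actH M) f v)) \<and>
     (\<forall>v\<in>carrier M. actH M (actE M v) = add M (actE M (actH M v)) (actE M v)) \<and>
     (\<forall>v\<in>carrier M. add M (actH M (actF M v)) (actF M v) = actF M (actH M v))"

definition Omega :: "('a, 'b) rmod_scheme \<Rightarrow> complex poly \<Rightarrow> 'a \<Rightarrow> 'a" where
  "Omega M u v = add M (smul M 2 (actF M (actE M v))) (polyop M (actH M) (pcompose u [:1, 1:]) v)"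

text \<open>Z_V, identified (via Z(R) = C[Omega]) with the set of polynomials q with q(Omega) V = 0.\<close>
definition ZV :: "('a, 'b) rmod_scheme \<Rightarrow> complex poly \<Rightarrow> complex poly set" where
  "ZV M u = {q. \<forall>v\<in>carrier M. polyop M (Omega M u) q v = zero M}"

inductive_set gen :: "('a, 'b) rmod_scheme \<Rightarrow> 'a \<Rightarrow> 'a set" for M x where
  base: "x \<in> gen M x"
| zer: "zero M \<in> gen M x"
| ad: "y \<in> gen M x \<Longrightarrow> z \<in> gen M x \<Longrightarrow> add M y z \<in> gen M x"
| sm: "y \<in> gen M x \<Longrightarrow> smul M a y \<in> gen M x"
| aE: "y \<in> gen M x \<Longrightarrow> actE M y \<in> gen M x"
| aF: "y \<in> gen M x \<Longrightarrow> actF M y \<in> gen M x"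
| aH: "y \<in> gen M x \<Longrightarrow> actH M y \<in> gen M x"

definition submod :: "('a, 'b) rmod_scheme \<Rightarrow> 'a set \<Rightarrow> bool" where
  "submod M N \<longleftrightarrow> N \<subseteq> carrier M \<and> zero M \<in> N \<and>
     (\<forall>x\<in>N. \<forall>y\<in>N. add M x y \<in> N) \<and> (\<forall>a. \<forall>x\<in>N. smul M a x \<in> N) \<and>
     (\<forall>x\<in>N. actE M x \<in> N) \<and> (\<forall>x\<in>N. actF M x \<in> N) \<and> (\<forall>x\<in>N. actH M x \<in> N)"

definition coset :: "('a, 'b) rmod_scheme \<Rightarrow> 'a set \<Rightarrow> 'a \<Rightarrow> 'a set" where
  "coset M N x = {y \<in> carrier M. \<exists>n\<in>N. y = add M x n}"

definition quot :: "('a, 'b) rmod_scheme \<Rightarrow> 'a set \<Rightarrow> 'a set rmod" where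
  "quot M N = \<lparr> carrier = coset M N ` carrier M,
     zero = coset M N (zero M),
     add = (\<lambda>X Y. coset M N (add M (SOME x. x \<in> X) (SOME y. y \<in> Y))),
     smul = (\<lambda>a X. coset M N (smul M a (SOME x. x \<in> X))),
     actE = (\<lambda>X. coset M N (actE M (SOME x. x \<in> X))),
     actF = (\<lambda>X. coset M N (actF M (SOME x. x \<in> X))),
     actH = (\<lambda>X. coset M N (actH M (SOME x. x \<in> X))) \<rparr>"

definition restr :: "('a, 'b) rmod_scheme \<Rightarrow> 'a set \<Rightarrow> ('a, 'b) rmod_scheme" where
  "restr M N = M\<lparr>carrier := N\<rparr>"

text \<open>Whittaker vectors / modules of type eta, where eta is given by c = eta(E) \<noteq> 0.\<close>
definition whittaker_vector :: "('a, 'b) rmod_scheme \<Rightarrow> complex \<Rightarrow> 'a \<Rightarrow> bool" where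
  "whittaker_vector M c v \<longleftrightarrow> v \<in> carrier M \<and> actE M v = smul M c v"

definition whittaker_module_cyc :: "complex poly \<Rightarrow> ('a, 'b) rmod_scheme \<Rightarrow> complex \<Rightarrow> 'a \<Rightarrow> bool" where
  "whittaker_module_cyc f M c w \<longleftrightarrow> is_Rmod f M \<and> whittaker_vector M c w \<and> carrier M = gen M w"

definition whittaker_module :: "complex poly \<Rightarrow> ('a, 'b) rmod_scheme \<Rightarrow> complex \<Rightarrow> bool" where
  "whittaker_module f M c \<longleftrightarrow> (\<exists>w. whittaker_module_cyc f M c w)"

definition irreducible_mod :: "complex poly \<Rightarrow> ('a, 'b) rmod_scheme \<Rightarrow> bool" where
  "irreducible_mod f M \<longleftrightarrow> is_Rmod f M \<and> carrier M \<noteq> {zero M} \<and>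
     (\<forall>N. submod M N \<longrightarrow> N = {zero M} \<or> N = carrier M)"

definition comp_series :: "complex poly \<Rightarrow> ('a, 'b) rmod_scheme \<Rightarrow> 'a set list \<Rightarrow> bool" where
  "comp_series f M Vs \<longleftrightarrow> Vs \<noteq> [] \<and> hd Vs = carrier M \<and> last Vs = {zero M} \<and>
     (\<forall>i<length Vs. submod M (Vs ! i)) \<and>
     (\<forall>i. Suc i < length Vs \<longrightarrow> Vs ! Suc i \<subseteq> Vs ! i \<and>
        irreducible_mod f (quot (restr M (Vs ! i)) (Vs ! Suc i)))"

definition finite_length :: "complex poly \<Rightarrow> ('a, 'b) rmod_scheme \<Rightarrow> bool" where
  "finite_length f M \<longleftrightarrow> (\<exists>Vs. comp_series f M Vs)"

end

theory Submission
  imports Defs "HOL-Computational_Algebra.Computational_Algebra" "HOL-Computational_Algebra.Field_as_Ring"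
begin


lemma coeff_lin_pow: "coeff ([:a, 1:] ^ Suc n) n = of_nat (Suc n) * (a::'a::comm_ring_1)"
proof (induction n)
  case 0 then show ?case by simp
next
  case (Suc n)
  have "[:a, 1:] ^ Suc (Suc n) = smult a ([:a, 1:] ^ Suc n) + pCons 0 ([:a, 1:] ^ Suc n)"
    by (simp add: algebra_simps)
  moreover have "coeff ([:a, 1:] ^ Suc n) (Suc n) = 1" by (rule coeff_linear_power)
  ultimately show ?case using Suc by (simp add: algebra_simps)
qed

lemma pcompose_pow: "(p ^ n) \<circ>\<^sub>p q = (p \<circ>\<^sub>p q) ^ n"
  for p q :: "'a::comm_semiring_1 poly"
  by (induction n) (simp_all add: pcompose_mult pcompose_1)

lemma diff_shift:
  fixes P :: "'a::idom poly"
  assumes d: "degree P = Suc m"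
  shows "degree (P - P \<circ>\<^sub>p [:-1, 1:]) \<le> m"
    and "coeff (P - P \<circ>\<^sub>p [:-1, 1:]) m = of_nat (Suc m) * lead_coeff P"
proof -
  let ?g = "[:-1, 1:] :: 'a poly"
  have dg: "degree ?g = 1" by simp
  have dc: "degree (P \<circ>\<^sub>p ?g) = Suc m" using d by (simp add: degree_pcompose)
  have lc: "lead_coeff (P \<circ>\<^sub>p ?g) = lead_coeff P" using lead_coeff_comp[of ?g P] by simp
  show "degree (P - P \<circ>\<^sub>p ?g) \<le> m"
  proof (rule degree_le)
    show "\<forall>i>m. coeff (P - P \<circ>\<^sub>p ?g) i = 0"
    proof (intro allI impI)
      fix i assume "m < i"
      then consider "i = Suc m" | "i > Suc m" by linarith
      then show "coeff (P - P \<circ>\<^sub>p ?g) i = 0"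
      proof cases
        case 1 then show ?thesis using lc d dc by simp
      next
        case 2 then show ?thesis using d dc by (simp add: coeff_eq_0)
      qed
    qed
  qed
  define a where "a = lead_coeff P"
  define P0 where "P0 = P - monom a (Suc m)"
  have P: "P = monom a (Suc m) + P0" by (simp add: P0_def)
  have dP0: "degree P0 \<le> m"
  proof (rule degree_le, intro allI impI)
    fix i assume "m < i"
    then consider "i = Suc m" | "i > Suc m" by linarith
    then show "coeff P0 i = 0"
      by cases (auto simp: P0_def a_def d coeff_eq_0 coeff_monom)
  qed
  have c0: "coeff (P0 \<circ>\<^sub>p ?g) m = coeff P0 m"
  proof (cases "degree P0 = m")
    case True
    then show ?thesis using lead_coeff_comp[of ?g P0] by (simp add: degree_pcompose)
  next
    case False
    then have "degree P0 < m" using dP0 by simp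
    moreover have "degree (P0 \<circ>\<^sub>p ?g) = degree P0" by (simp add: degree_pcompose)
    ultimately show ?thesis by (simp add: coeff_eq_0)
  qed
  have mon: "monom a (Suc m) \<circ>\<^sub>p ?g = smult a (?g ^ Suc m)"
    by (simp add: monom_altdef pcompose_smult pcompose_pow pcompose_pCons del: power_Suc)
  have "coeff (?g ^ Suc m) m = of_nat (Suc m) * (-1)" by (rule coeff_lin_pow)
  then show "coeff (P - P \<circ>\<^sub>p ?g) m = of_nat (Suc m) * lead_coeff P"
    apply (subst (1 2) P)
    apply (simp only: pcompose_add mon coeff_diff coeff_add coeff_smult c0)
    apply (simp add: a_def algebra_simps)
    done
qed
lemma ideal_shift_coeffs:
  fixes K :: "complex poly poly set"
  assumes add: "\<And>P Q. P \<in> K \<Longrightarrow> Q \<in> K \<Longrightarrow> P + Q \<in> K"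
    and mult: "\<And>R P. P \<in> K \<Longrightarrow> R * P \<in> K"
    and sh: "\<And>P. P \<in> K \<Longrightarrow> P \<circ>\<^sub>p [:-1, 1:] \<in> K"
  shows "P \<in> K \<Longrightarrow> [:coeff P k:] \<in> K"
proof (induction "degree P" arbitrary: P k rule: less_induct)
  case (less P)
  have zero: "0 \<in> K" using mult[OF less.prems, of 0] by simp
  show ?case
  proof (cases "degree P")
    case 0
    then have "P = [:coeff P 0:]" by (metis degree_0_id)
    then show ?thesis
      using less.prems zero by (cases k) (auto simp: coeff_eq_0 0)
  next
    case (Suc m)
    define D where "D = P - P \<circ>\<^sub>p [:-1, 1:]"
    have DK: "D \<in> K" unfolding D_def
      using add[OF less.prems mult[OF sh[OF less.prems], of "-1"]] by simp
    have dD: "degree D < degree P" using diff_shift(1)[OF Suc] Suc by (simp add: D_def)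
    have cD: "coeff D m = of_nat (Suc m) * lead_coeff P" using diff_shift(2)[OF Suc] by (simp add: D_def)
    have "[:coeff D m:] \<in> K" using less.hyps[OF dD DK] .
    then have "[:[:inverse (of_nat (Suc m)):]:] * [:coeff D m:] \<in> K" by (rule mult)
    moreover have "[:[:inverse (of_nat (Suc m)):]:] * [:coeff D m:] = [:lead_coeff P:]"
      unfolding cD by (simp add: of_nat_poly smult_smult field_simps del: of_nat_Suc)
    ultimately have lK: "[:lead_coeff P:] \<in> K" by simp
    define P0 where "P0 = P - monom (lead_coeff P) (Suc m)"
    have "monom (lead_coeff P) (Suc m) = monom 1 (Suc m) * [:lead_coeff P:]"
      by (simp add: smult_monom)
    then have P0K: "P0 \<in> K" unfolding P0_def
      using add[OF less.prems mult[OF lK, of "- monom 1 (Suc m)"]] by simp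
    have dP0: "degree P0 < degree P"
    proof -
      have "degree P0 \<le> m"
      proof (rule degree_le, intro allI impI)
        fix i assume "m < i"
        then consider "i = Suc m" | "i > Suc m" by linarith
        then show "coeff P0 i = 0"
          by cases (auto simp: P0_def Suc coeff_eq_0)
      qed
      then show ?thesis using Suc by simp
    qed
    show ?thesis
    proof (cases "k = Suc m")
      case True then show ?thesis using lK Suc by simp
    next
      case False
      then have "coeff P k = coeff P0 k" by (simp add: P0_def)
      then show ?thesis using less.hyps[OF dP0 P0K] by simp
    qed
  qed
qed



locale vsp =
  fixes M :: "('a, 'b) rmod_scheme"
  assumes vs: "vspace M"
begin

lemma zero_c[simp]: "zero M \<in> carrier M" using vs by (simp add: vspace_def)
lemma add_c[simp]: "x \<in> carrier M \<Longrightarrow> y \<in> carrier M \<Longrightarrow> add M x y \<in> carrier M"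
  using vs by (simp add: vspace_def)
lemma smul_c[simp]: "x \<in> carrier M \<Longrightarrow> smul M a x \<in> carrier M"
  using vs by (simp add: vspace_def)
lemma add_assoc: "x \<in> carrier M \<Longrightarrow> y \<in> carrier M \<Longrightarrow> z \<in> carrier M \<Longrightarrow>
    add M (add M x y) z = add M x (add M y z)"
  using vs unfolding vspace_def by blast
lemma add_comm: "x \<in> carrier M \<Longrightarrow> y \<in> carrier M \<Longrightarrow> add M x y = add M y x"
  using vs unfolding vspace_def by blast
lemma add_lcomm: "x \<in> carrier M \<Longrightarrow> y \<in> carrier M \<Longrightarrow> z \<in> carrier M \<Longrightarrow>
    add M x (add M y z) = add M y (add M x z)"
proof -
  assume a: "x \<in> carrier M" "y \<in> carrier M" "z \<in> carrier M"
  have "add M x (add M y z) = add M (add M x y) z" using a by (simp add: add_assoc)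
  also have "\<dots> = add M (add M y x) z" using a add_comm[of x y] by simp
  also have "\<dots> = add M y (add M x z)" using a by (simp add: add_assoc)
  finally show ?thesis .
qed
lemma add_swap: "a \<in> carrier M \<Longrightarrow> b \<in> carrier M \<Longrightarrow> c \<in> carrier M \<Longrightarrow> d \<in> carrier M \<Longrightarrow>
   add M (add M a b) (add M c d) = add M (add M a c) (add M b d)"
proof -
  assume a: "a \<in> carrier M" "b \<in> carrier M" "c \<in> carrier M" "d \<in> carrier M"
  have "add M (add M a b) (add M c d) = add M a (add M b (add M c d))" using a by (simp add: add_assoc)
  also have "\<dots> = add M a (add M c (add M b d))" using a add_lcomm[of b c d] by simp
  also have "\<dots> = add M (add M a c) (add M b d)" using a by (simp add: add_assoc)
  finally show ?thesis .
qed

lemma zero_add[simp]: "x \<in> carrier M \<Longrightarrow> add M (zero M) x = x"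
  using vs unfolding vspace_def by blast
lemma add_zero[simp]: "x \<in> carrier M \<Longrightarrow> add M x (zero M) = x"
  using add_comm[of x "zero M"] zero_add[of x] by simp
lemma smul_addS: "x \<in> carrier M \<Longrightarrow> smul M (a + b) x = add M (smul M a x) (smul M b x)"
  using vs by (simp add: vspace_def)
lemma smul_addV: "x \<in> carrier M \<Longrightarrow> y \<in> carrier M \<Longrightarrow>
    smul M a (add M x y) = add M (smul M a x) (smul M a y)"
  using vs by (simp add: vspace_def)
lemma smul_smul[simp]: "x \<in> carrier M \<Longrightarrow> smul M a (smul M b x) = smul M (a * b) x"
  using vs by (simp add: vspace_def)
lemma smul_one[simp]: "x \<in> carrier M \<Longrightarrow> smul M 1 x = x"
  using vs by (simp add: vspace_def)
lemma has_neg: "x \<in> carrier M \<Longrightarrow> \<exists>y\<in>carrier M. add M x y = zero M"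
  using vs unfolding vspace_def by blast

lemma add_cancel: assumes "x \<in> carrier M" "y \<in> carrier M" "z \<in> carrier M"
  and "add M x y = add M x z" shows "y = z"
proof -
  obtain n where n: "n \<in> carrier M" "add M x n = zero M" using has_neg assms(1) by blast
  have nx: "add M n x = zero M" using add_comm[OF n(1) assms(1)] n(2) by (rule trans)
  have "y = add M (zero M) y" using assms(2) by (rule zero_add[symmetric])
  also have "\<dots> = add M (add M n x) y" by (simp only: nx)
  also have "\<dots> = add M n (add M x y)" by (rule add_assoc[OF n(1) assms(1,2)])
  also have "\<dots> = add M n (add M x z)" by (simp only: assms(4))
  also have "\<dots> = add M (add M n x) z" by (rule add_assoc[OF n(1) assms(1,3), symmetric])
  also have "\<dots> = z" using assms(3) by (simp only: nx zero_add)
  finally show ?thesis .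
qed

lemma add_cancel2: assumes "x \<in> carrier M" "y \<in> carrier M" "z \<in> carrier M"
  and "add M y x = add M z x" shows "y = z"
  using add_cancel[OF assms(1-3)] assms(4) add_comm[OF assms(1,2)] add_comm[OF assms(1,3)] by simp

lemma add_self_zero: assumes "x \<in> carrier M" "y \<in> carrier M" "add M x y = x" shows "y = zero M"
  using add_cancel[of x y "zero M"] assms by simp

lemma smul_zeroS[simp]: "x \<in> carrier M \<Longrightarrow> smul M 0 x = zero M"
  by (rule add_self_zero[of "smul M 0 x" "smul M 0 x"]) (simp_all add: smul_addS[of x 0 0, simplified, symmetric])

lemma smul_zeroV[simp]: "smul M a (zero M) = zero M"
  by (rule add_self_zero[of "smul M a (zero M)" "smul M a (zero M)"]) (simp_all add: smul_addV[of "zero M" "zero M" a, simplified, symmetric])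

lemma neg_add[simp]: "x \<in> carrier M \<Longrightarrow> add M x (smul M (-1) x) = zero M"
  using smul_addS[of x 1 "-1", simplified, symmetric] by simp

lemma neg_add'[simp]: "x \<in> carrier M \<Longrightarrow> add M (smul M (-1) x) x = zero M"
  using neg_add[of x] add_comm[of x "smul M (-1) x"] by simp

lemma add_neg_cancel: "x \<in> carrier M \<Longrightarrow> y \<in> carrier M \<Longrightarrow> add M (add M x y) (smul M (-1) y) = x"
  by (simp add: add_assoc)

lemma eq_from_diff: assumes "x \<in> carrier M" "y \<in> carrier M" "add M x (smul M (-1) y) = zero M"
  shows "x = y"
proof -
  have e1: "add M (add M x (smul M (-1) y)) y = y" using assms by simp
  have e2: "add M (add M x (smul M (-1) y)) y = x"
    using assms(1,2) by (simp add: add_assoc del: neg_add)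
  from e2[symmetric] e1 show ?thesis by (rule trans)
qed

end

definition gfold :: "('a, 'b) rmod_scheme \<Rightarrow> ('c \<Rightarrow> 'a \<Rightarrow> 'a) \<Rightarrow> ('a \<Rightarrow> 'a) \<Rightarrow> 'c list \<Rightarrow> 'a \<Rightarrow> 'a" where
  "gfold M S T L v = foldr (\<lambda>a acc. add M (S a v) (T acc)) L (zero M)"

definition gpolyop :: "('a, 'b) rmod_scheme \<Rightarrow> ('c::zero \<Rightarrow> 'a \<Rightarrow> 'a) \<Rightarrow> ('a \<Rightarrow> 'a) \<Rightarrow> 'c poly \<Rightarrow> 'a \<Rightarrow> 'a" where
  "gpolyop M S T q v = gfold M S T (coeffs q) v"

lemma polyop_gp: "polyop M T q v = gpolyop M (smul M) T q v"
  by (simp add: polyop_def gpolyop_def gfold_def)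

lemma gfold_Nil[simp]: "gfold M S T [] v = zero M" by (simp add: gfold_def)
lemma gfold_Cons[simp]: "gfold M S T (a # L) v = add M (S a v) (T (gfold M S T L v))"
  by (simp add: gfold_def)

locale gp = vsp M for M :: "('a, 'b) rmod_scheme" +
  fixes S :: "'c::comm_ring_1 \<Rightarrow> 'a \<Rightarrow> 'a" and T :: "'a \<Rightarrow> 'a"
  assumes S_c[simp]: "x \<in> carrier M \<Longrightarrow> S a x \<in> carrier M"
    and S_addS: "x \<in> carrier M \<Longrightarrow> S (a + b) x = add M (S a x) (S b x)"
    and S_mult: "x \<in> carrier M \<Longrightarrow> S (a * b) x = S a (S b x)"
    and S_one[simp]: "x \<in> carrier M \<Longrightarrow> S 1 x = x"
    and S_addV: "x \<in> carrier M \<Longrightarrow> y \<in> carrier M \<Longrightarrow> S a (add M x y) = add M (S a x) (S a y)"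
    and T_c[simp]: "x \<in> carrier M \<Longrightarrow> T x \<in> carrier M"
    and T_add: "x \<in> carrier M \<Longrightarrow> y \<in> carrier M \<Longrightarrow> T (add M x y) = add M (T x) (T y)"
    and T_S: "x \<in> carrier M \<Longrightarrow> T (S a x) = S a (T x)"
begin

lemma S_zeroS[simp]: "x \<in> carrier M \<Longrightarrow> S 0 x = zero M"
  by (rule add_self_zero[of "S 0 x" "S 0 x"]) (simp_all add: S_addS[of x 0 0, simplified, symmetric])

lemma S_zeroV[simp]: "S a (zero M) = zero M"
  by (rule add_self_zero[of "S a (zero M)" "S a (zero M)"]) (simp_all add: S_addV[of "zero M" "zero M" a, simplified, symmetric])

lemma T_zero[simp]: "T (zero M) = zero M"
  using T_S[of "zero M" 0] by simp

lemma gfold_c[simp]: "v \<in> carrier M \<Longrightarrow> gfold M S T L v \<in> carrier M"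
  by (induction L) auto

lemma gp_c[simp]: "v \<in> carrier M \<Longrightarrow> gpolyop M S T q v \<in> carrier M"
  by (simp add: gpolyop_def)

lemma gp_0[simp]: "gpolyop M S T 0 v = zero M"
  by (simp add: gpolyop_def)

lemma gp_pCons: "v \<in> carrier M \<Longrightarrow>
    gpolyop M S T (pCons a q) v = add M (S a v) (T (gpolyop M S T q v))"
  by (cases "a = 0 \<and> q = 0") (auto simp: gpolyop_def coeffs_pCons_eq_cCons cCons_def)

lemma gp_const[simp]: "v \<in> carrier M \<Longrightarrow> gpolyop M S T [:a:] v = S a v"
  by (simp add: gp_pCons)

lemma gp_one[simp]: "v \<in> carrier M \<Longrightarrow> gpolyop M S T 1 v = v"
  by (simp add: one_pCons gp_pCons del: pCons_one)

lemma gp_X: "v \<in> carrier M \<Longrightarrow> gpolyop M S T [:a, b:] v = add M (S a v) (T (S b v))"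
  by (simp add: gp_pCons)

lemma gp_add: "v \<in> carrier M \<Longrightarrow>
    gpolyop M S T (p + q) v = add M (gpolyop M S T p v) (gpolyop M S T q v)"
proof (induction p q rule: poly_induct2)
  case 0 then show ?case by simp
next
  case (pCons a p b q)
  then show ?case
    by (simp add: gp_pCons S_addS T_add add_swap)
qed

lemma gp_addV: "x \<in> carrier M \<Longrightarrow> y \<in> carrier M \<Longrightarrow>
    gpolyop M S T q (add M x y) = add M (gpolyop M S T q x) (gpolyop M S T q y)"
proof (induction q)
  case 0 then show ?case by simp
next
  case (pCons a q)
  then show ?case by (simp add: gp_pCons S_addV T_add add_swap)
qed

lemma gp_S: "v \<in> carrier M \<Longrightarrow> gpolyop M S T q (S a v) = S a (gpolyop M S T q v)"
proof (induction q)
  case 0 then show ?case by simp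
next
  case (pCons b q)
  then show ?case by (simp add: gp_pCons S_addV T_S S_mult[symmetric] mult.commute)
qed

lemma gp_smult: "v \<in> carrier M \<Longrightarrow> gpolyop M S T (smult a q) v = S a (gpolyop M S T q v)"
proof (induction q)
  case 0 then show ?case by simp
next
  case (pCons b q)
  then show ?case by (simp add: gp_pCons S_addV T_S S_mult)
qed

lemma gp_pCons0: "v \<in> carrier M \<Longrightarrow> gpolyop M S T (pCons 0 q) v = T (gpolyop M S T q v)"
  by (simp add: gp_pCons)

lemma gp_mult: "v \<in> carrier M \<Longrightarrow>
    gpolyop M S T (p * q) v = gpolyop M S T p (gpolyop M S T q v)"
proof (induction p)
  case 0 then show ?case by simp
next
  case (pCons a p)
  then show ?case by (simp add: gp_pCons gp_add gp_smult gp_pCons0)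
qed

lemma gp_closed:
  assumes "zero M \<in> N" "\<And>x y. x \<in> N \<Longrightarrow> y \<in> N \<Longrightarrow> add M x y \<in> N"
    "\<And>x a. x \<in> N \<Longrightarrow> S a x \<in> N" "\<And>x. x \<in> N \<Longrightarrow> T x \<in> N" "v \<in> N"
  shows "gpolyop M S T q v \<in> N"
proof -
  have "gfold M S T L v \<in> N" for L by (induction L) (use assms in auto)
  then show ?thesis by (simp add: gpolyop_def)
qed

lemma gp_comm:
  assumes A_c: "\<And>x. x \<in> carrier M \<Longrightarrow> A x \<in> carrier M"
    and A_add: "\<And>x y. x \<in> carrier M \<Longrightarrow> y \<in> carrier M \<Longrightarrow> A (add M x y) = add M (A x) (A y)"
    and A_zero: "A (zero M) = zero M"
    and A_S: "\<And>x a. x \<in> carrier M \<Longrightarrow> A (S a x) = S a (A x)"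
    and A_T: "\<And>x. x \<in> carrier M \<Longrightarrow> A (T x) = T (A x)"
    and v: "v \<in> carrier M"
  shows "A (gpolyop M S T q v) = gpolyop M S T q (A v)"
proof -
  have "A (gfold M S T L v) = gfold M S T L (A v)" for L
    by (induction L) (simp_all add: A_zero A_add A_S A_T v A_c)
  then show ?thesis by (simp add: gpolyop_def)
qed

lemma gp_shift:
  assumes A_c: "\<And>x. x \<in> carrier M \<Longrightarrow> A x \<in> carrier M"
    and A_add: "\<And>x y. x \<in> carrier M \<Longrightarrow> y \<in> carrier M \<Longrightarrow> A (add M x y) = add M (A x) (A y)"
    and A_S: "\<And>x a. x \<in> carrier M \<Longrightarrow> A (S a x) = S a (A x)"
    and A_T: "\<And>x. x \<in> carrier M \<Longrightarrow> A (T x) = add M (T (A x)) (S d (A x))"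
    and v: "v \<in> carrier M"
  shows "A (gpolyop M S T q v) = gpolyop M S T (q \<circ>\<^sub>p [:d, 1:]) (A v)"
  using v
proof (induction q arbitrary: v)
  case 0
  have "A (zero M) = zero M" using A_S[of "zero M" 0] A_c[of "zero M"] by simp
  then show ?case by simp
next
  case (pCons a q)
  have "A (gpolyop M S T (pCons a q) v) = add M (S a (A v)) (A (T (gpolyop M S T q v)))"
    using pCons by (simp add: gp_pCons A_add A_S)
  also have "\<dots> = add M (S a (A v)) (add M (T (gpolyop M S T (q \<circ>\<^sub>p [:d, 1:]) (A v)))
       (S d (gpolyop M S T (q \<circ>\<^sub>p [:d, 1:]) (A v))))"
    using pCons by (simp add: A_T)
  also have "\<dots> = gpolyop M S T (pCons a q \<circ>\<^sub>p [:d, 1:]) (A v)"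
    using pCons A_c by (simp add: pcompose_pCons gp_add gp_mult gp_X add_comm gp_pCons0 gp_smult)
  finally show ?case .
qed

end



lemma (in vsp) gp_smul: assumes "lin_op M T" shows "gp M (smul M) T"
  using assms unfolding lin_op_def
  by unfold_locales (simp_all add: smul_addS smul_addV vs)

locale rm = vsp M for M :: "('a, 'b) rmod_scheme" +
  fixes f u :: "complex poly"
  assumes rmod: "is_Rmod f M"
    and hu: "f = smult (1/2) (pcompose u [:1, 1:] - u)"
begin

lemma linE: "lin_op M (actE M)" and linF: "lin_op M (actF M)" and linH: "lin_op M (actH M)"
  using rmod by (simp_all add: is_Rmod_def)

lemma E_c[simp]: "x \<in> carrier M \<Longrightarrow> actE M x \<in> carrier M" using linE by (simp add: lin_op_def)
lemma F_c[simp]: "x \<in> carrier M \<Longrightarrow> actF M x \<in> carrier M" using linF by (simp add: lin_op_def)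
lemma H_c[simp]: "x \<in> carrier M \<Longrightarrow> actH M x \<in> carrier M" using linH by (simp add: lin_op_def)
lemma E_add: "x \<in> carrier M \<Longrightarrow> y \<in> carrier M \<Longrightarrow> actE M (add M x y) = add M (actE M x) (actE M y)"
  using linE by (simp add: lin_op_def)
lemma F_add: "x \<in> carrier M \<Longrightarrow> y \<in> carrier M \<Longrightarrow> actF M (add M x y) = add M (actF M x) (actF M y)"
  using linF by (simp add: lin_op_def)
lemma H_add: "x \<in> carrier M \<Longrightarrow> y \<in> carrier M \<Longrightarrow> actH M (add M x y) = add M (actH M x) (actH M y)"
  using linH by (simp add: lin_op_def)
lemma E_smul: "x \<in> carrier M \<Longrightarrow> actE M (smul M a x) = smul M a (actE M x)"
  using linE by (simp add: lin_op_def)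
lemma F_smul: "x \<in> carrier M \<Longrightarrow> actF M (smul M a x) = smul M a (actF M x)"
  using linF by (simp add: lin_op_def)
lemma H_smul: "x \<in> carrier M \<Longrightarrow> actH M (smul M a x) = smul M a (actH M x)"
  using linH by (simp add: lin_op_def)

lemma rel_EF: "v \<in> carrier M \<Longrightarrow> actE M (actF M v) = add M (actF M (actE M v)) (polyop M (actH M) f v)"
  using rmod by (simp add: is_Rmod_def)
lemma rel_HE: "v \<in> carrier M \<Longrightarrow> actH M (actE M v) = add M (actE M (actH M v)) (actE M v)"
  using rmod by (simp add: is_Rmod_def)
lemma rel_HF: "v \<in> carrier M \<Longrightarrow> add M (actH M (actF M v)) (actF M v) = actF M (actH M v)"
  using rmod by (simp add: is_Rmod_def)

sublocale gH: gp M "smul M" "actH M" by (rule gp_smul[OF linH])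
sublocale gE: gp M "smul M" "actE M" by (rule gp_smul[OF linE])
sublocale gF: gp M "smul M" "actF M" by (rule gp_smul[OF linF])

lemma E_zero[simp]: "actE M (zero M) = zero M" by (rule gE.T_zero)
lemma F_zero[simp]: "actF M (zero M) = zero M" by (rule gF.T_zero)
lemma H_zero[simp]: "actH M (zero M) = zero M" by (rule gH.T_zero)

abbreviation PH where "PH q v \<equiv> gpolyop M (smul M) (actH M) q v"

lemma EH: "v \<in> carrier M \<Longrightarrow> actE M (actH M v) = add M (actH M (actE M v)) (smul M (-1) (actE M v))"
proof -
  assume v: "v \<in> carrier M"
  have "add M (add M (actE M (actH M v)) (actE M v)) (smul M (-1) (actE M v)) = actE M (actH M v)"
    using v by (simp add: add_neg_cancel)
  then show ?thesis using rel_HE[OF v] by simp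
qed

lemma FH: "v \<in> carrier M \<Longrightarrow> actF M (actH M v) = add M (actH M (actF M v)) (smul M 1 (actF M v))"
  using rel_HF by simp

lemma HF: "v \<in> carrier M \<Longrightarrow> actH M (actF M v) = add M (actF M (actH M v)) (smul M (-1) (actF M v))"
proof -
  assume v: "v \<in> carrier M"
  have "add M (add M (actH M (actF M v)) (actF M v)) (smul M (-1) (actF M v)) = actH M (actF M v)"
    using v by (simp add: add_neg_cancel)
  then show ?thesis using rel_HF[OF v] by simp
qed

lemma E_PH: "v \<in> carrier M \<Longrightarrow> actE M (PH q v) = PH (q \<circ>\<^sub>p [:-1, 1:]) (actE M v)"
  by (rule gH.gp_shift) (simp_all add: E_add E_smul EH)

lemma F_PH: "v \<in> carrier M \<Longrightarrow> actF M (PH q v) = PH (q \<circ>\<^sub>p [:1, 1:]) (actF M v)"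
  by (rule gH.gp_shift) (simp_all add: F_add F_smul FH del: smul_one)

lemma H_PH: "v \<in> carrier M \<Longrightarrow> actH M (PH q v) = PH q (actH M v)"
  by (rule gH.gp_comm) (simp_all add: H_add H_smul)

definition Om where "Om = Omega M u"
definition u1 where "u1 = pcompose u [:1, 1:]"

lemma Om_def2: "Om v = add M (smul M 2 (actF M (actE M v))) (PH u1 v)"
  by (simp add: Om_def Omega_def u1_def polyop_gp)

lemma Om_c[simp]: "v \<in> carrier M \<Longrightarrow> Om v \<in> carrier M"
  by (simp add: Om_def2)

lemma Om_add: "x \<in> carrier M \<Longrightarrow> y \<in> carrier M \<Longrightarrow> Om (add M x y) = add M (Om x) (Om y)"
  by (simp add: Om_def2 E_add F_add smul_addV gH.gp_addV add_swap)

lemma Om_smul: "x \<in> carrier M \<Longrightarrow> Om (smul M a x) = smul M a (Om x)"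
  by (simp add: Om_def2 E_smul F_smul smul_addV gH.gp_S mult.commute)

lemma lin_Om: "lin_op M Om"
  by (simp add: lin_op_def Om_add Om_smul)

lemma poly_id1: "smult 2 f + u = u1"
  by (simp add: hu u1_def)

lemma poly_id2: "u1 \<circ>\<^sub>p [:1, 1:] = smult 2 (f \<circ>\<^sub>p [:1, 1:]) + u1"
  by (simp add: hu u1_def pcompose_diff pcompose_smult)

lemma poly_id3: "u1 \<circ>\<^sub>p [:-1, 1:] = u"
proof -
  have "u1 \<circ>\<^sub>p [:-1, 1:] = u \<circ>\<^sub>p ([:1, 1:] \<circ>\<^sub>p [:-1, 1:])"
    by (simp add: u1_def pcompose_assoc)
  also have "[:1, 1:] \<circ>\<^sub>p [:-1, 1:] = ([:0, 1:] :: complex poly)"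
    by (simp add: pcompose_pCons)
  finally show ?thesis by simp
qed

lemma H_Om: "v \<in> carrier M \<Longrightarrow> actH M (Om v) = Om (actH M v)"
proof -
  assume v: "v \<in> carrier M"
  have "actH M (actF M (actE M v)) = actF M (actE M (actH M v))"
  proof -
    have "actH M (actF M (actE M v)) = add M (actF M (actH M (actE M v))) (smul M (-1) (actF M (actE M v)))"
      using v by (simp add: HF)
    also have "\<dots> = add M (add M (actF M (actE M (actH M v))) (actF M (actE M v))) (smul M (-1) (actF M (actE M v)))"
      using v by (simp add: rel_HE F_add)
    also have "\<dots> = actF M (actE M (actH M v))"
      using v by (simp add: add_neg_cancel)
    finally show ?thesis .
  qed
  then show ?thesis using v by (simp add: Om_def2 H_add H_smul H_PH)
qed

lemma E_Om: "v \<in> carrier M \<Longrightarrow> actE M (Om v) = Om (actE M v)"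
proof -
  assume v: "v \<in> carrier M"
  let ?x = "actE M v"
  have x: "?x \<in> carrier M" using v by simp
  have "actE M (Om v) = add M (smul M 2 (actE M (actF M ?x))) (PH u ?x)"
    using v by (simp add: Om_def2 E_add E_smul E_PH poly_id3)
  also have "\<dots> = add M (smul M 2 (add M (actF M (actE M ?x)) (PH f ?x))) (PH u ?x)"
    using x by (simp add: rel_EF polyop_gp)
  also have "\<dots> = add M (smul M 2 (actF M (actE M ?x))) (add M (smul M 2 (PH f ?x)) (PH u ?x))"
    using x by (simp add: smul_addV add_assoc)
  also have "add M (smul M 2 (PH f ?x)) (PH u ?x) = PH u1 ?x"
    using x by (simp add: poly_id1[symmetric] gH.gp_add gH.gp_smult)
  finally show ?thesis by (simp add: Om_def2)
qed

lemma F_Om: "v \<in> carrier M \<Longrightarrow> actF M (Om v) = Om (actF M v)"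
proof -
  assume v: "v \<in> carrier M"
  let ?y = "actF M v"
  have y: "?y \<in> carrier M" using v by simp
  have "Om (actF M v) = add M (smul M 2 (actF M (add M (actF M (actE M v)) (PH f v)))) (PH u1 ?y)"
    using v by (simp add: Om_def2 rel_EF polyop_gp)
  also have "\<dots> = add M (smul M 2 (actF M (actF M (actE M v)))) (add M (smul M 2 (PH (f \<circ>\<^sub>p [:1, 1:]) ?y)) (PH u1 ?y))"
    using v by (simp add: F_add F_PH smul_addV add_assoc)
  also have "add M (smul M 2 (PH (f \<circ>\<^sub>p [:1, 1:]) ?y)) (PH u1 ?y) = PH (u1 \<circ>\<^sub>p [:1, 1:]) ?y"
    using y by (simp add: poly_id2 gH.gp_add gH.gp_smult)
  finally show ?thesis using v by (simp add: Om_def2 F_add F_smul F_PH)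
qed

sublocale gO: gp M "smul M" Om by (rule gp_smul[OF lin_Om])

abbreviation PO where "PO q v \<equiv> gpolyop M (smul M) Om q v"

lemma E_PO: "v \<in> carrier M \<Longrightarrow> actE M (PO q v) = PO q (actE M v)"
  by (rule gO.gp_comm) (simp_all add: E_add E_smul E_Om)
lemma F_PO: "v \<in> carrier M \<Longrightarrow> actF M (PO q v) = PO q (actF M v)"
  by (rule gO.gp_comm) (simp_all add: F_add F_smul F_Om)
lemma H_PO: "v \<in> carrier M \<Longrightarrow> actH M (PO q v) = PO q (actH M v)"
  by (rule gO.gp_comm) (simp_all add: H_add H_smul H_Om)
lemma smul_PO: "v \<in> carrier M \<Longrightarrow> smul M c (PO q v) = PO q (smul M c v)"
  by (rule gO.gp_comm) (simp_all add: smul_addV Om_smul mult.commute)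

lemma gp2: "gp M PO (actH M)"
  by unfold_locales (simp_all add: gO.gp_add gO.gp_mult gO.gp_addV H_add H_PO)

sublocale g2: gp M PO "actH M" by (rule gp2)

abbreviation act2 where "act2 P v \<equiv> gpolyop M PO (actH M) P v"

lemma PO_neg1: "v \<in> carrier M \<Longrightarrow> PO (-1) v = smul M (-1) v"
proof -
  assume v: "v \<in> carrier M"
  have "(-1 :: complex poly) = smult (-1) 1" by (simp only: smult_minus_left smult_1_left)
  then show ?thesis using v by (simp only: gO.gp_smult gO.gp_one)
qed

lemma E_act2: "v \<in> carrier M \<Longrightarrow> actE M (act2 P v) = act2 (P \<circ>\<^sub>p [:-1, 1:]) (actE M v)"
  by (rule g2.gp_shift) (simp_all add: E_add E_PO EH PO_neg1)

lemma F_act2: "v \<in> carrier M \<Longrightarrow> actF M (act2 P v) = act2 (P \<circ>\<^sub>p [:1, 1:]) (actF M v)"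
  by (rule g2.gp_shift) (simp_all add: F_add F_PO FH)

lemma smul_act2: "v \<in> carrier M \<Longrightarrow> smul M c (act2 P v) = act2 P (smul M c v)"
  by (rule g2.gp_comm) (simp_all add: smul_addV smul_PO H_smul mult.commute)

end



context rm
begin

lemma gen_sub: "x \<in> carrier M \<Longrightarrow> gen M x \<subseteq> carrier M"
proof
  fix y assume x: "x \<in> carrier M" and yx: "y \<in> gen M x"
  from yx show "y \<in> carrier M" by (induction rule: gen.induct) (auto simp: x)
qed

lemma gen_submod: "x \<in> carrier M \<Longrightarrow> submod M (gen M x)"
  using gen_sub by (auto simp: submod_def intro: gen.intros)

lemma gen_min: assumes "submod M N" "x \<in> N" shows "gen M x \<subseteq> N"
proof
  fix y assume "y \<in> gen M x"
  then show "y \<in> N" by (induction rule: gen.induct) (use assms in \<open>auto simp: submod_def\<close>)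
qed

lemma submodD:
  assumes "submod M N"
  shows "N \<subseteq> carrier M" "zero M \<in> N" "\<And>x y. x \<in> N \<Longrightarrow> y \<in> N \<Longrightarrow> add M x y \<in> N"
    "\<And>x a. x \<in> N \<Longrightarrow> smul M a x \<in> N" "\<And>x. x \<in> N \<Longrightarrow> actE M x \<in> N"
    "\<And>x. x \<in> N \<Longrightarrow> actF M x \<in> N" "\<And>x. x \<in> N \<Longrightarrow> actH M x \<in> N"
  using assms by (auto simp: submod_def)

lemma submod_PH: "submod M N \<Longrightarrow> v \<in> N \<Longrightarrow> PH q v \<in> N"
  by (rule gH.gp_closed) (auto dest: submodD)

lemma submod_Om: "submod M N \<Longrightarrow> v \<in> N \<Longrightarrow> Om v \<in> N"
  by (simp add: Om_def2 submodD submod_PH)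

lemma submod_PO: "submod M N \<Longrightarrow> v \<in> N \<Longrightarrow> PO q v \<in> N"
  by (rule gO.gp_closed) (auto dest: submodD submod_Om)

lemma submod_act2: "submod M N \<Longrightarrow> v \<in> N \<Longrightarrow> act2 P v \<in> N"
  by (rule g2.gp_closed) (auto dest: submodD submod_PO)

lemma zero_submod: "submod M {zero M}"
  by (simp add: submod_def)

lemma act2_const_poly: "v \<in> carrier M \<Longrightarrow> act2 (map_poly (\<lambda>a. [:a:]) q) v = PH q v"
proof (induction q)
  case 0 then show ?case by simp
next
  case (pCons a q)
  have "map_poly (\<lambda>a. [:a:]) (pCons a q) = pCons [:a:] (map_poly (\<lambda>a. [:a:]) q)"
    by (simp add: map_poly_pCons)
  then show ?case using pCons by (simp add: g2.gp_pCons gH.gp_pCons)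
qed

lemma F_whit:
  assumes y: "y \<in> carrier M" and Ey: "actE M y = smul M c y" and c: "c \<noteq> 0"
  shows "\<exists>Q. actF M y = act2 Q y"
proof -
  define Q0 where "Q0 = [:[:0, 1:]:] + smult (-1) (map_poly (\<lambda>a. [:a:]) u1)"
  have "act2 Q0 y = add M (act2 [:[:0, 1:]:] y) (PO (-1) (act2 (map_poly (\<lambda>a. [:a:]) u1) y))"
    unfolding Q0_def by (simp only: g2.gp_add[OF y] g2.gp_smult[OF y])
  also have "\<dots> = add M (Om y) (smul M (-1) (PH u1 y))"
    using y by (simp add: act2_const_poly PO_neg1 gO.gp_X)
  also have "Om y = add M (smul M (2 * c) (actF M y)) (PH u1 y)"
    using y by (simp add: Om_def2 Ey F_smul)
  finally have "act2 Q0 y = smul M (2 * c) (actF M y)"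
    using y by (simp add: add_neg_cancel)
  then have "act2 (smult [:1 / (2 * c):] Q0) y = actF M y"
    using y c by (simp add: g2.gp_smult)
  then show ?thesis by (intro exI[of _ "smult [:1 / (2 * c):] Q0"]) simp
qed

lemma span:
  assumes y: "y \<in> carrier M" and Ey: "actE M y = smul M c y" and c: "c \<noteq> 0"
    and x: "x \<in> gen M y"
  shows "\<exists>P. x = act2 P y"
  using x
proof (induction rule: gen.induct)
  case base
  then show ?case using y by (intro exI[of _ 1]) simp
next
  case zer
  then show ?case by (intro exI[of _ 0]) simp
next
  case (ad a b)
  then obtain P Q where "a = act2 P y" "b = act2 Q y" by blast
  then show ?case using y by (intro exI[of _ "P + Q"]) (simp add: g2.gp_add)
next
  case (sm a b)
  then obtain P where "a = act2 P y" by blast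
  then show ?case using y by (intro exI[of _ "smult [:b:] P"]) (simp add: g2.gp_smult)
next
  case (aE a)
  then obtain P where "a = act2 P y" by blast
  then show ?case using y
    by (intro exI[of _ "smult [:c:] (P \<circ>\<^sub>p [:-1, 1:])"]) (simp add: g2.gp_smult E_act2 Ey smul_act2)
next
  case (aF a)
  then obtain P where P: "a = act2 P y" by blast
  obtain Q where Q: "actF M y = act2 Q y" using F_whit[OF y Ey c] by blast
  show ?case using y P Q
    by (intro exI[of _ "(P \<circ>\<^sub>p [:1, 1:]) * Q"]) (simp add: g2.gp_mult F_act2)
next
  case (aH a)
  then obtain P where "a = act2 P y" by blast
  then show ?case using y by (intro exI[of _ "pCons 0 P"]) (simp add: g2.gp_pCons0)
qed

lemma key:
  assumes y: "y \<in> carrier M" and Ey: "actE M y = smul M c y" and c: "c \<noteq> 0"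
    and N: "submod M N" and P: "act2 P y \<in> N"
  shows "PO (coeff P k) y \<in> N"
proof -
  let ?K = "{P. act2 P y \<in> N}"
  have "[:coeff P k:] \<in> ?K"
  proof (rule ideal_shift_coeffs)
    show "P \<in> ?K" using P by simp
  next
    fix P Q assume "P \<in> ?K" "Q \<in> ?K"
    then show "P + Q \<in> ?K" using y N by (simp add: g2.gp_add submodD)
  next
    fix R P assume "P \<in> ?K"
    then show "R * P \<in> ?K" using y N by (simp add: g2.gp_mult submod_act2)
  next
    fix P assume "P \<in> ?K"
    then have "smul M (1 / c) (actE M (act2 P y)) \<in> N" using N by (simp add: submodD)
    moreover have "smul M (1 / c) (actE M (act2 P y)) = act2 (P \<circ>\<^sub>p [:-1, 1:]) y"
      using y c by (simp add: E_act2 Ey smul_act2[symmetric])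
    ultimately show "P \<circ>\<^sub>p [:-1, 1:] \<in> ?K" by simp
  qed
  then show ?thesis using y by simp
qed

lemma from_coeffs:
  assumes y: "y \<in> carrier M" and N: "submod M N" and h: "\<forall>k. PO (coeff P k) y \<in> N"
  shows "act2 P y \<in> N"
  using h
proof (induction P)
  case 0 then show ?case using N by (simp add: submodD)
next
  case (pCons a P)
  have "PO a y \<in> N" using pCons.prems[rule_format, of 0] by simp
  moreover have "act2 P y \<in> N" using pCons.IH pCons.prems
    by (metis coeff_pCons_Suc)
  ultimately show ?case using y N by (simp add: g2.gp_pCons submodD)
qed

end



lemma polyop_restr[simp]: "polyop (restr M A) T q v = polyop M T q v"
  by (simp add: polyop_def restr_def)

lemma restr_simps[simp]: "carrier (restr M A) = A" "zero (restr M A) = zero M" "add (restr M A) = add M"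
  "smul (restr M A) = smul M" "actE (restr M A) = actE M" "actF (restr M A) = actF M" "actH (restr M A) = actH M"
  by (simp_all add: restr_def)

lemma submod_restr: "A \<subseteq> carrier M \<Longrightarrow> submod (restr M A) N \<longleftrightarrow> submod M N \<and> N \<subseteq> A"
  by (auto simp: submod_def)

context rm
begin

lemma restr_rmod: assumes A: "submod M A" shows "is_Rmod f (restr M A)"
proof -
  note sA = submodD[OF A]
  have sub: "\<And>x. x \<in> A \<Longrightarrow> x \<in> carrier M" using sA(1) by blast
  have v: "vspace (restr M A)"
    unfolding vspace_def restr_simps
  proof (intro conjI ballI allI)
    fix x assume x: "x \<in> A"
    show "\<exists>y\<in>A. add M x y = zero M"
      using x sA(4)[OF x, of "-1"] neg_add[OF sub[OF x]] by blast
  next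
    fix x y z assume "x \<in> A" "y \<in> A" "z \<in> A"
    then show "add M (add M x y) z = add M x (add M y z)" using sub add_assoc by blast
  next
    fix x y assume "x \<in> A" "y \<in> A"
    then show "add M x y = add M y x" using sub add_comm by blast
  qed (use sA sub in \<open>simp_all add: smul_addS smul_addV\<close>)
  have l: "lin_op (restr M A) (actE M)" "lin_op (restr M A) (actF M)" "lin_op (restr M A) (actH M)"
    unfolding lin_op_def restr_simps using sA sub
    by (simp_all add: E_add F_add H_add E_smul F_smul H_smul)
  show ?thesis unfolding is_Rmod_def using v l sub
    by (simp add: rel_EF rel_HE rel_HF)
qed

end

locale qm = rm +
  fixes B
  assumes B: "submod M B"
begin

abbreviation cs where "cs x \<equiv> coset M B x"

lemma sB: "B \<subseteq> carrier M" "zero M \<in> B" "\<And>x y. x \<in> B \<Longrightarrow> y \<in> B \<Longrightarrow> add M x y \<in> B"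
    "\<And>x a. x \<in> B \<Longrightarrow> smul M a x \<in> B" "\<And>x. x \<in> B \<Longrightarrow> actE M x \<in> B"
    "\<And>x. x \<in> B \<Longrightarrow> actF M x \<in> B" "\<And>x. x \<in> B \<Longrightarrow> actH M x \<in> B"
  using submodD[OF B] by auto

lemma Bc: "x \<in> B \<Longrightarrow> x \<in> carrier M" using sB(1) by blast

lemma cs_mem: "x \<in> carrier M \<Longrightarrow> x \<in> cs x"
  unfolding coset_def using sB(2) by force

lemma cs_sub: "cs x \<subseteq> carrier M" unfolding coset_def by blast

lemma cs_same: assumes x: "x \<in> carrier M" and y: "y \<in> cs x" shows "cs y = cs x"
proof -
  obtain n where n: "n \<in> B" "y = add M x n" and yc: "y \<in> carrier M" using y unfolding coset_def by blast
  have nc: "n \<in> carrier M" using Bc n(1) .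
  show ?thesis
  proof
    show "cs y \<subseteq> cs x"
    proof
      fix z assume "z \<in> cs y"
      then obtain m where m: "m \<in> B" "z = add M y m" and zc: "z \<in> carrier M" unfolding coset_def by blast
      have "z = add M x (add M n m)" using m n x nc Bc[OF m(1)] by (simp add: add_assoc)
      then show "z \<in> cs x" unfolding coset_def using zc sB(3)[OF n(1) m(1)] by blast
    qed
  next
    show "cs x \<subseteq> cs y"
    proof
      fix z assume "z \<in> cs x"
      then obtain m where m: "m \<in> B" "z = add M x m" and zc: "z \<in> carrier M" unfolding coset_def by blast
      have mc: "m \<in> carrier M" using Bc m(1) .
      have "add M y (add M (smul M (-1) n) m) = add M x (add M n (add M (smul M (-1) n) m))"
        using n(2) x nc mc by (simp add: add_assoc)
      also have "add M n (add M (smul M (-1) n) m) = add M (add M n (smul M (-1) n)) m"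
        using nc mc by (simp only: add_assoc smul_c)
      also have "\<dots> = m" using nc mc by simp
      also have "add M x m = z" using m(2) by simp
      finally have "z = add M y (add M (smul M (-1) n) m)" by simp
      moreover have "add M (smul M (-1) n) m \<in> B" using sB n(1) m(1) by blast
      ultimately show "z \<in> cs y" unfolding coset_def using zc by blast
    qed
  qed
qed

lemma cs_eq: "x \<in> carrier M \<Longrightarrow> y \<in> carrier M \<Longrightarrow> y \<in> cs x \<Longrightarrow> cs x = cs y"
  by (rule cs_same[symmetric])

lemma some_in: "x \<in> carrier M \<Longrightarrow> (SOME z. z \<in> cs x) \<in> cs x"
  by (rule someI) (rule cs_mem)

lemma some_cs: "x \<in> carrier M \<Longrightarrow> cs (SOME z. z \<in> cs x) = cs x"
  using some_in cs_same by blast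

lemma some_cs_c: "x \<in> carrier M \<Longrightarrow> (SOME z. z \<in> cs x) \<in> carrier M"
  using some_in cs_sub by blast

lemma cs_zero_iff: "x \<in> carrier M \<Longrightarrow> cs x = cs (zero M) \<longleftrightarrow> x \<in> B"
proof
  assume x: "x \<in> carrier M" and e: "cs x = cs (zero M)"
  then have "x \<in> cs (zero M)" using cs_mem by blast
  then show "x \<in> B" unfolding coset_def using Bc by auto
next
  assume x: "x \<in> carrier M" and "x \<in> B"
  then have "x \<in> cs (zero M)" unfolding coset_def by (auto intro!: bexI[of _ x])
  then show "cs x = cs (zero M)" by (rule cs_same[OF zero_c])
qed

lemma resp:
  assumes g_c: "\<And>x. x \<in> carrier M \<Longrightarrow> g x \<in> carrier M"
    and g_add: "\<And>x y. x \<in> carrier M \<Longrightarrow> y \<in> carrier M \<Longrightarrow> g (add M x y) = add M (g x) (g y)"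
    and g_B: "\<And>x. x \<in> B \<Longrightarrow> g x \<in> B"
    and x: "x \<in> carrier M" and y: "y \<in> cs x"
  shows "cs (g y) = cs (g x)"
proof -
  obtain n where n: "n \<in> B" "y = add M x n" using y unfolding coset_def by blast
  have "g y = add M (g x) (g n)" using n x Bc g_add by simp
  then have "g y \<in> cs (g x)" unfolding coset_def using g_c x g_B n Bc by auto
  then show ?thesis by (rule cs_same[OF g_c[OF x]])
qed

lemma resp2:
  assumes x: "x \<in> carrier M" and y: "y \<in> carrier M" and x': "x' \<in> cs x" and y': "y' \<in> cs y"
  shows "cs (add M x' y') = cs (add M x y)"
proof -
  obtain n where n: "n \<in> B" "x' = add M x n" using x' unfolding coset_def by blast
  obtain m where m: "m \<in> B" "y' = add M y m" using y' unfolding coset_def by blast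
  have "add M x' y' = add M (add M x y) (add M n m)" using n m x y Bc by (simp add: add_swap)
  then have "add M x' y' \<in> cs (add M x y)" unfolding coset_def using x y n m Bc sB(3) by auto
  then show ?thesis by (rule cs_same[OF add_c[OF x y]])
qed

abbreviation Q where "Q \<equiv> quot M B"

lemma Q_carrier: "carrier Q = cs ` carrier M" by (simp add: quot_def)
lemma Q_zero: "zero Q = cs (zero M)" by (simp add: quot_def)

lemma Q_add: "x \<in> carrier M \<Longrightarrow> y \<in> carrier M \<Longrightarrow> add Q (cs x) (cs y) = cs (add M x y)"
  unfolding quot_def by (simp, rule resp2) (auto intro: someI cs_mem)

lemma Q_smul: "x \<in> carrier M \<Longrightarrow> smul Q a (cs x) = cs (smul M a x)"
  unfolding quot_def by (simp, rule resp) (auto simp: smul_addV sB intro: someI cs_mem)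
lemma Q_E: "x \<in> carrier M \<Longrightarrow> actE Q (cs x) = cs (actE M x)"
  unfolding quot_def by (simp, rule resp) (auto simp: E_add sB intro: someI cs_mem)
lemma Q_F: "x \<in> carrier M \<Longrightarrow> actF Q (cs x) = cs (actF M x)"
  unfolding quot_def by (simp, rule resp) (auto simp: F_add sB intro: someI cs_mem)
lemma Q_H: "x \<in> carrier M \<Longrightarrow> actH Q (cs x) = cs (actH M x)"
  unfolding quot_def by (simp, rule resp) (auto simp: H_add sB intro: someI cs_mem)

lemma Q_polyop: "v \<in> carrier M \<Longrightarrow> polyop Q (actH Q) q (cs v) = cs (polyop M (actH M) q v)"
proof -
  assume v: "v \<in> carrier M"
  have "foldr (\<lambda>a acc. add Q (smul Q a (cs v)) (actH Q acc)) L (zero Q)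
      = cs (foldr (\<lambda>a acc. add M (smul M a v) (actH M acc)) L (zero M))
    \<and> foldr (\<lambda>a acc. add M (smul M a v) (actH M acc)) L (zero M) \<in> carrier M" for L
    by (induction L) (simp_all add: Q_zero Q_add Q_smul Q_H v)
  then show ?thesis by (simp add: polyop_def)
qed

lemma PHc[simp]: "v \<in> carrier M \<Longrightarrow> polyop M (actH M) q v \<in> carrier M"
  by (simp add: polyop_gp)

lemma Q_cases: "X \<in> carrier Q \<Longrightarrow> (\<And>x. x \<in> carrier M \<Longrightarrow> X = cs x \<Longrightarrow> P) \<Longrightarrow> P"
  by (auto simp: Q_carrier)

lemma Q_rmod: "is_Rmod f Q"
proof -
  have v: "vspace Q"
    unfolding vspace_def
  proof (intro conjI ballI allI)
    show "zero Q \<in> carrier Q" by (simp add: Q_zero Q_carrier)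
  next
    fix X Y assume "X \<in> carrier Q" "Y \<in> carrier Q"
    then show "add Q X Y \<in> carrier Q" by (elim Q_cases) (simp add: Q_add Q_carrier)
  next
    fix a X assume "X \<in> carrier Q"
    then show "smul Q a X \<in> carrier Q" by (elim Q_cases) (simp add: Q_smul Q_carrier)
  next
    fix X Y Z assume "X \<in> carrier Q" "Y \<in> carrier Q" "Z \<in> carrier Q"
    then show "add Q (add Q X Y) Z = add Q X (add Q Y Z)" by (elim Q_cases) (simp add: Q_add add_assoc)
  next
    fix X Y assume "X \<in> carrier Q" "Y \<in> carrier Q"
    then show "add Q X Y = add Q Y X" by (elim Q_cases) (simp add: Q_add add_comm)
  next
    fix X assume "X \<in> carrier Q"
    then show "add Q (zero Q) X = X" by (elim Q_cases) (simp add: Q_add Q_zero)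
  next
    fix X assume "X \<in> carrier Q"
    then show "\<exists>Y\<in>carrier Q. add Q X Y = zero Q"
    proof (elim Q_cases)
      fix x assume x: "x \<in> carrier M" and X: "X = cs x"
      show ?thesis
        by (rule bexI[of _ "cs (smul M (-1) x)"]) (simp_all add: X x Q_add Q_zero Q_carrier)
    qed
  next
    fix a b X assume "X \<in> carrier Q"
    then show "smul Q (a + b) X = add Q (smul Q a X) (smul Q b X)"
      by (elim Q_cases) (simp add: Q_add Q_smul smul_addS)
  next
    fix a X Y assume "X \<in> carrier Q" "Y \<in> carrier Q"
    then show "smul Q a (add Q X Y) = add Q (smul Q a X) (smul Q a Y)"
      by (elim Q_cases) (simp add: Q_add Q_smul smul_addV)
  next
    fix a b X assume "X \<in> carrier Q"
    then show "smul Q (a * b) X = smul Q a (smul Q b X)"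
      by (elim Q_cases) (simp add: Q_smul)
  next
    fix X assume "X \<in> carrier Q"
    then show "smul Q 1 X = X" by (elim Q_cases) (simp add: Q_smul)
  qed
  have l: "lin_op Q (actE Q)" "lin_op Q (actF Q)" "lin_op Q (actH Q)"
    unfolding lin_op_def
    by (auto elim!: Q_cases simp: Q_add Q_smul Q_E Q_F Q_H E_add F_add H_add E_smul F_smul H_smul Q_carrier)
  have r1: "\<forall>V\<in>carrier Q. actE Q (actF Q V) = add Q (actF Q (actE Q V)) (polyop Q (actH Q) f V)"
    by (auto elim!: Q_cases simp: Q_add Q_E Q_F Q_polyop rel_EF)
  have r2: "\<forall>V\<in>carrier Q. actH Q (actE Q V) = add Q (actE Q (actH Q V)) (actE Q V)"
    by (auto elim!: Q_cases simp: Q_add Q_E Q_H rel_HE)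
  have r3: "\<forall>V\<in>carrier Q. add Q (actH Q (actF Q V)) (actF Q V) = actF Q (actH Q V)"
    by (auto elim!: Q_cases simp: Q_add Q_F Q_H rel_HF)
  show ?thesis unfolding is_Rmod_def using v l r1 r2 r3 by blast
qed

lemma Q_pull_submod:
  assumes N: "submod Q N"
  shows "submod M {z \<in> carrier M. cs z \<in> N}" and "B \<subseteq> {z \<in> carrier M. cs z \<in> N}"
proof -
  have N0: "zero Q \<in> N" and Nadd: "\<And>X Y. X \<in> N \<Longrightarrow> Y \<in> N \<Longrightarrow> add Q X Y \<in> N"
    and Nsm: "\<And>X a. X \<in> N \<Longrightarrow> smul Q a X \<in> N"
    and NE: "\<And>X. X \<in> N \<Longrightarrow> actE Q X \<in> N" and NF: "\<And>X. X \<in> N \<Longrightarrow> actF Q X \<in> N"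
    and NH: "\<And>X. X \<in> N \<Longrightarrow> actH Q X \<in> N"
    using N by (auto simp: submod_def)
  show "submod M {z \<in> carrier M. cs z \<in> N}"
    unfolding submod_def
  proof (intro conjI ballI allI)
    show "zero M \<in> {z \<in> carrier M. cs z \<in> N}" using N0 by (simp add: Q_zero)
  next
    fix x y assume "x \<in> {z \<in> carrier M. cs z \<in> N}" "y \<in> {z \<in> carrier M. cs z \<in> N}"
    then show "add M x y \<in> {z \<in> carrier M. cs z \<in> N}" using Nadd[of "cs x" "cs y"] by (simp add: Q_add)
  next
    fix a x assume "x \<in> {z \<in> carrier M. cs z \<in> N}"
    then show "smul M a x \<in> {z \<in> carrier M. cs z \<in> N}" using Nsm[of "cs x" a] by (simp add: Q_smul)
  next
    fix x assume "x \<in> {z \<in> carrier M. cs z \<in> N}"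
    then show "actE M x \<in> {z \<in> carrier M. cs z \<in> N}" using NE[of "cs x"] by (simp add: Q_E)
  next
    fix x assume "x \<in> {z \<in> carrier M. cs z \<in> N}"
    then show "actF M x \<in> {z \<in> carrier M. cs z \<in> N}" using NF[of "cs x"] by (simp add: Q_F)
  next
    fix x assume "x \<in> {z \<in> carrier M. cs z \<in> N}"
    then show "actH M x \<in> {z \<in> carrier M. cs z \<in> N}" using NH[of "cs x"] by (simp add: Q_H)
  qed auto
  show "B \<subseteq> {z \<in> carrier M. cs z \<in> N}"
  proof
    fix x assume x: "x \<in> B"
    then have "cs x = cs (zero M)" using cs_zero_iff[OF Bc[OF x]] by simp
    then show "x \<in> {z \<in> carrier M. cs z \<in> N}" using N0 Bc[OF x] by (simp add: Q_zero)
  qed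
qed

end



locale wm = rm M f u for M :: "('a, 'b) rmod_scheme" and f u +
  fixes c w p n
  assumes c: "c \<noteq> 0" and wv: "whittaker_vector M c w" and carr: "carrier M = gen M w"
    and hp: "irreducible p" and hZ: "ZV M u = {q. p ^ n dvd q}"
begin

lemma w_c: "w \<in> carrier M" using wv by (simp add: whittaker_vector_def)
lemma Ew: "actE M w = smul M c w" using wv by (simp add: whittaker_vector_def)

lemma polyop_Om: "polyop M (Omega M u) q v = PO q v"
  by (simp add: polyop_gp Om_def)

definition y where "y i = PO (p ^ i) w"

lemma y_c[simp]: "y i \<in> carrier M" by (simp add: y_def w_c)

lemma Ey: "actE M (y i) = smul M c (y i)"
  by (simp add: y_def E_PO w_c Ew smul_PO)

lemma y_Suc: "y (Suc i) = PO p (y i)"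
  by (simp add: y_def gO.gp_mult w_c)

lemma y0: "y 0 = w" by (simp add: y_def w_c)

lemma gen_dec: "gen M (y (Suc i)) \<subseteq> gen M (y i)"
  by (rule gen_min[OF gen_submod[OF y_c]]) (simp add: y_Suc submod_PO[OF gen_submod[OF y_c]] gen.base)

lemma ann: assumes "PO q w = zero M" shows "p ^ n dvd q"
proof -
  let ?N = "{v \<in> carrier M. PO q v = zero M}"
  have "submod M ?N"
    unfolding submod_def
  proof (intro conjI ballI allI)
    show "zero M \<in> ?N"
      using gO.gp_S[of "zero M" q 0] by simp
  qed (auto simp: gO.gp_addV gO.gp_S E_PO[symmetric] F_PO[symmetric] H_PO[symmetric])
  then have "gen M w \<subseteq> ?N" using gen_min assms w_c by blast
  then have "q \<in> ZV M u" using carr by (auto simp: ZV_def polyop_Om)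
  then show ?thesis using hZ by simp
qed

lemma yn: "y n = zero M"
proof -
  have "p ^ n \<in> ZV M u" using hZ by simp
  then show ?thesis using w_c by (simp add: ZV_def polyop_Om y_def)
qed

lemma gen_zero: "gen M (zero M) = {zero M}"
  using gen_min[OF zero_submod] gen.zer by blast

lemma p_nonunit: "\<not> p dvd 1" using hp by (simp add: irreducible_def)
lemma p_nz: "p \<noteq> 0" using hp by auto

lemma nontriv: assumes i: "i < n" shows "y i \<notin> gen M (y (Suc i))"
proof
  assume "y i \<in> gen M (y (Suc i))"
  then obtain P where P: "y i = act2 P (y (Suc i))" using span[OF y_c Ey c] by blast
  have A: "act2 (P * [:p:]) (y i) = y i"
    by (simp only: g2.gp_mult[OF y_c] g2.gp_const[OF y_c] y_Suc[symmetric] P[symmetric])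
  have Z: "act2 (1 + smult (-1) (P * [:p:])) (y i) = zero M"
    by (simp only: g2.gp_add[OF y_c] g2.gp_smult[OF y_c] g2.gp_one[OF y_c] A PO_neg1[OF y_c] neg_add[OF y_c])
  have "PO (coeff (1 + smult (-1) (P * [:p:])) 0) (y i) \<in> {zero M}"
    by (rule key[OF y_c Ey c zero_submod]) (simp only: Z singletonI)
  moreover have "coeff (1 + smult (-1) (P * [:p:])) 0 = 1 - p * coeff P 0"
    by simp
  ultimately have "PO (1 - p * coeff P 0) (PO (p ^ i) w) = zero M"
    by (simp add: y_def)
  then have "PO ((1 - p * coeff P 0) * p ^ i) w = zero M"
    by (simp add: gO.gp_mult w_c)
  then have "p ^ n dvd (1 - p * coeff P 0) * p ^ i" by (rule ann)
  moreover have "p ^ Suc i dvd p ^ n" by (rule le_imp_power_dvd) (use i in simp)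
  ultimately have "p ^ Suc i dvd (1 - p * coeff P 0) * p ^ i"
    using dvd_trans by blast
  then have "p ^ i * p dvd p ^ i * (1 - p * coeff P 0)"
    by (simp only: power_Suc2 mult.commute)
  then have D: "p dvd 1 - p * coeff P 0" using p_nz by simp
  have "p dvd 1"
    using dvd_add[OF D dvd_triv_left[of p "coeff P 0"]] by simp
  then show False using p_nonunit by simp
qed


lemma quot_props:
  assumes i: "i < n"
  shows "whittaker_module f (quot (restr M (gen M (y i))) (gen M (y (Suc i)))) c
       \<and> irreducible_mod f (quot (restr M (gen M (y i))) (gen M (y (Suc i))))"
proof -
  define A where "A = gen M (y i)"
  define B where "B = gen M (y (Suc i))"
  have sA: "submod M A" unfolding A_def by (rule gen_submod[OF y_c])
  have sB: "submod M B" unfolding B_def by (rule gen_submod[OF y_c])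
  have AC: "A \<subseteq> carrier M" using sA by (simp add: submod_def)
  have BA: "B \<subseteq> A" unfolding A_def B_def by (rule gen_dec)
  have yA: "y i \<in> A" unfolding A_def by (rule gen.base)
  have yB: "y i \<notin> B" unfolding B_def by (rule nontriv[OF i])
  have rA: "is_Rmod f (restr M A)" by (rule restr_rmod[OF sA])
  interpret r': rm "restr M A" f u
    by unfold_locales (use rA hu in \<open>simp_all add: is_Rmod_def\<close>)
  have sB': "submod (restr M A) B" using submod_restr[OF AC] sB BA by simp
  interpret q: qm "restr M A" f u B
    by unfold_locales (rule sB')
  let ?Q = "quot (restr M A) B"
  have Qr: "is_Rmod f ?Q" by (rule q.Q_rmod)
  have Qc: "carrier ?Q = q.cs ` A" by (simp add: q.Q_carrier)
  have Qz: "zero ?Q = q.cs (zero M)" by (simp add: q.Q_zero)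
  have csz: "z \<in> A \<Longrightarrow> q.cs z = zero ?Q \<longleftrightarrow> z \<in> B" for z
    using q.cs_zero_iff[of z] by (simp add: Qz)
  have irr: "irreducible_mod f ?Q"
    unfolding irreducible_mod_def
  proof (intro conjI allI impI)
    show "is_Rmod f ?Q" by (rule Qr)
    show "carrier ?Q \<noteq> {zero ?Q}"
    proof
      assume e: "carrier ?Q = {zero ?Q}"
      have "q.cs (y i) \<in> carrier ?Q" using Qc yA by simp
      then have "q.cs (y i) = zero ?Q" using e by simp
      then show False using csz[OF yA] yB by simp
    qed
  next
    fix N assume N: "submod ?Q N"
    show "N = {zero ?Q} \<or> N = carrier ?Q"
    proof (cases "N = {zero ?Q}")
      case True then show ?thesis by simp
    next
      case False
      note nz = False
      have N0: "zero ?Q \<in> N" and NC: "N \<subseteq> carrier ?Q" using N by (auto simp: submod_def)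
      obtain X where X: "X \<in> N" "X \<noteq> zero ?Q" using nz N0 by blast
      obtain x where x: "x \<in> A" "X = q.cs x" using X(1) NC Qc by blast
      have xB: "x \<notin> B" using csz[OF x(1)] X x by simp
      define N' where "N' = {z \<in> carrier (restr M A). q.cs z \<in> N}"
      have sN': "submod (restr M A) N'" unfolding N'_def by (rule q.Q_pull_submod(1)[OF N])
      have BN': "B \<subseteq> N'" unfolding N'_def by (rule q.Q_pull_submod(2)[OF N])
      have sN: "submod M N'" using sN' submod_restr[OF AC] by simp
      have xN: "x \<in> N'" using x X unfolding N'_def by simp
      obtain P where P: "x = act2 P (y i)" using span[OF y_c Ey c, of x] x(1) A_def by blast
      have allk: "PO (coeff P k) (y i) \<in> N'" for k
        by (rule key[OF y_c Ey c sN]) (use xN P in simp)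
      have "\<exists>k. \<not> p dvd coeff P k"
      proof (rule ccontr)
        assume "\<not> (\<exists>k. \<not> p dvd coeff P k)"
        then have dv: "p dvd coeff P k" for k by blast
        have "PO (coeff P k) (y i) \<in> B" for k
        proof -
          obtain b where b: "coeff P k = b * p" using dv[of k] by (auto simp: dvd_def mult.commute)
          have "PO (coeff P k) (y i) = PO b (y (Suc i))" by (simp add: b gO.gp_mult y_Suc)
          moreover have "y (Suc i) \<in> B" unfolding B_def by (rule gen.base)
          ultimately show ?thesis using submod_PO[OF sB] by simp
        qed
        then have "act2 P (y i) \<in> B" using from_coeffs[OF y_c sB] by blast
        then show False using xB P by simp
      qed
      then obtain k where k: "\<not> p dvd coeff P k" by blast
      have "prime_elem p" using hp by (simp add: prime_elem_iff_irreducible)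
      then have "coprime p (coeff P k)" using k by (rule prime_elem_imp_coprime)
      then have g: "gcd p (coeff P k) = 1" by (rule coprime_imp_gcd_eq_1)
      define s where "s = fst (bezout_coefficients p (coeff P k))"
      define t where "t = snd (bezout_coefficients p (coeff P k))"
      have st: "s * p + t * coeff P k = 1"
        using bezout_coefficients_fst_snd[of p "coeff P k"] g by (simp add: s_def t_def)
      have "y i = PO (s * p + t * coeff P k) (y i)" by (simp add: st)
      also have "\<dots> = add M (PO s (y (Suc i))) (PO t (PO (coeff P k) (y i)))"
        by (simp add: gO.gp_add gO.gp_mult y_Suc)
      finally have e: "y i = add M (PO s (y (Suc i))) (PO t (PO (coeff P k) (y i)))" .
      have yN: "y i \<in> N'"
      proof -
        have "y (Suc i) \<in> N'" using BN' unfolding B_def by (blast intro: gen.base)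
        then have "PO s (y (Suc i)) \<in> N'" using submod_PO[OF sN] by blast
        moreover have "PO t (PO (coeff P k) (y i)) \<in> N'" using submod_PO[OF sN allk] by blast
        ultimately have "add M (PO s (y (Suc i))) (PO t (PO (coeff P k) (y i))) \<in> N'"
          by (rule submodD(3)[OF sN])
        then show ?thesis using e by metis
      qed
      have "A \<subseteq> N'" unfolding A_def by (rule gen_min[OF sN yN])
      then have "carrier ?Q \<subseteq> N" using Qc unfolding N'_def by auto
      then show ?thesis using NC by blast
    qed
  qed
  interpret rQ: rm ?Q f u
    by unfold_locales (use Qr hu in \<open>simp_all add: is_Rmod_def\<close>)
  have wh: "whittaker_module f ?Q c"
    unfolding whittaker_module_def whittaker_module_cyc_def
  proof (intro exI conjI)
    show "is_Rmod f ?Q" by (rule Qr)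
    show "whittaker_vector ?Q c (q.cs (y i))"
      unfolding whittaker_vector_def using yA Qc
      by (simp add: q.Q_E[simplified] q.Q_smul[simplified] Ey)
    show "carrier ?Q = gen ?Q (q.cs (y i))"
    proof
      have "q.cs (y i) \<in> carrier ?Q" using Qc yA by simp
      then show "gen ?Q (q.cs (y i)) \<subseteq> carrier ?Q" by (rule rQ.gen_sub)
    next
      have "q.cs z \<in> gen ?Q (q.cs (y i))" if "z \<in> gen M (y i)" for z
        using that
      proof (induction rule: gen.induct)
        case base then show ?case by (rule gen.base)
      next
        case zer then show ?case using gen.zer[of ?Q "q.cs (y i)"] by (simp add: Qz)
      next
        case (ad a b)
        then show ?case using gen.ad[OF ad.IH] q.Q_add[of a b] by (simp add: A_def)
      next
        case (sm a b)
        then show ?case using gen.sm[OF sm.IH, of b] q.Q_smul[of a b] by (simp add: A_def)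
      next
        case (aE a)
        then show ?case using gen.aE[OF aE.IH] q.Q_E[of a] by (simp add: A_def)
      next
        case (aF a)
        then show ?case using gen.aF[OF aF.IH] q.Q_F[of a] by (simp add: A_def)
      next
        case (aH a)
        then show ?case using gen.aH[OF aH.IH] q.Q_H[of a] by (simp add: A_def)
      qed
      then show "carrier ?Q \<subseteq> gen ?Q (q.cs (y i))" using Qc A_def by auto
    qed
  qed
  show ?thesis using wh irr by (simp add: A_def B_def)
qed

lemma Yeq: "polyop M (Omega M u) (p ^ i) w = y i" by (simp add: polyop_Om y_def)

lemma main_wm:
  assumes hn: "n \<ge> 1"
  shows "(\<forall>i<n. whittaker_module f
              (quot (restr M (gen M (polyop M (Omega M u) (p ^ i) w)))
                    (gen M (polyop M (Omega M u) (p ^ Suc i) w))) c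
           \<and> irreducible_mod f
              (quot (restr M (gen M (polyop M (Omega M u) (p ^ i) w)))
                    (gen M (polyop M (Omega M u) (p ^ Suc i) w))))
       \<and> comp_series f M (map (\<lambda>i. gen M (polyop M (Omega M u) (p ^ i) w)) [0..<Suc n])
       \<and> finite_length f M"
proof -
  have cs: "comp_series f M (map (\<lambda>i. gen M (y i)) [0..<Suc n])"
    unfolding comp_series_def
  proof (intro conjI allI impI)
    show "map (\<lambda>i. gen M (y i)) [0..<Suc n] \<noteq> []" by simp
    show "hd (map (\<lambda>i. gen M (y i)) [0..<Suc n]) = carrier M"
      by (simp add: hd_map y0 carr del: upt_Suc)
    show "last (map (\<lambda>i. gen M (y i)) [0..<Suc n]) = {zero M}"
      by (simp add: last_map yn gen_zero del: upt_Suc)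
  next
    fix i assume "i < length (map (\<lambda>i. gen M (y i)) [0..<Suc n])"
    then show "submod M (map (\<lambda>i. gen M (y i)) [0..<Suc n] ! i)"
      by (simp add: gen_submod del: upt_Suc)
  next
    fix i assume "Suc i < length (map (\<lambda>i. gen M (y i)) [0..<Suc n])"
    then have i: "i < n" by simp
    show "map (\<lambda>i. gen M (y i)) [0..<Suc n] ! Suc i \<subseteq> map (\<lambda>i. gen M (y i)) [0..<Suc n] ! i"
      using i by (simp add: gen_dec nth_map del: upt_Suc)
    show "irreducible_mod f (quot (restr M (map (\<lambda>i. gen M (y i)) [0..<Suc n] ! i))
        (map (\<lambda>i. gen M (y i)) [0..<Suc n] ! Suc i))"
      using i quot_props[OF i] by (simp add: nth_map del: upt_Suc)
  qed
  show ?thesis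
    unfolding Yeq using cs quot_props by (auto simp: finite_length_def)
qed

end



theorem mainTheorem11:
  fixes f u p :: "complex poly" and V :: "'a rmod" and c :: complex and w :: 'a and n :: nat
  assumes hu: "f = smult (1/2) (pcompose u [:1, 1:] - u)"
    and hc: "c \<noteq> 0"
    and hV: "whittaker_module_cyc f V c w"
    and hp: "irreducible p"
    and hn: "n \<ge> 1"
    and hZ: "ZV V u = {q. p ^ n dvd q}"
  shows "(\<forall>i<n. whittaker_module f
              (quot (restr V (gen V (polyop V (Omega V u) (p ^ i) w)))
                    (gen V (polyop V (Omega V u) (p ^ Suc i) w))) c
           \<and> irreducible_mod f
              (quot (restr V (gen V (polyop V (Omega V u) (p ^ i) w)))
                    (gen V (polyop V (Omega V u) (p ^ Suc i) w))))
       \<and> comp_series f V (map (\<lambda>i. gen V (polyop V (Omega V u) (p ^ i) w)) [0..<Suc n])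
       \<and> finite_length f V"
proof -
  interpret wm V f u c w p n
    by unfold_locales (use hV hc hp hZ hu in \<open>auto simp: whittaker_module_cyc_def is_Rmod_def\<close>)
  show ?thesis by (rule main_wm[OF hn])
qed

end
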